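(* Let $M$ be a manifold. Then $\mathsf{L}(M,\mathbb{R})$ holds.
   Context: All spaces are Hausdorff and maps continuous. A manifold is a connected Hausdorff space locally homeomorphic to $\mathbb{R}^n$. For a non-Lindelöf space $X$ and a space $Y$, $\mathsf{L}(X,Y)$ means: for every continuous $f:X\to Y$ there is a Lindelöf $Z\subset X$ with $f(Z)=f(X)$. (For Lindelöf $X$ the property is regarded as trivially true.) *)

theory Defs
  imports "HOL-Analysis.Analysis"
begin

definition manifold :: "'a topology \<Rightarrow> nat \<Rightarrow> bool" where
  "manifold M n \<longleftrightarrow> connected_space M \<and> Hausdorff_space M \<and>
     (\<forall>x \<in> topspace M. \<exists>U. openin M U \<and> x \<in> U \<and>
         subtopology M U homeomorphic_space Euclidean_space n)"

definition property_L :: "'a topology \<Rightarrow> 'b topology \<Rightarrow> bool" where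
  "property_L X Y \<longleftrightarrow> Lindelof_space X \<or>
     (\<forall>f. continuous_map X Y f \<longrightarrow>
        (\<exists>Z. Z \<subseteq> topspace X \<and> Lindelof_space (subtopology X Z) \<and> f ` Z = f ` topspace X))"

end

theory Submission
  imports Defs
begin

lemma real_bracket_set:
  fixes T :: "real set"
  shows "\<exists>S. countable S \<and> S \<subseteq> T \<and> (\<forall>y\<in>T. \<exists>a\<in>S. \<exists>b\<in>S. a \<le> y \<and> y \<le> b)"
proof -
  define L where "L = (\<lambda>q. SOME t. t\<in>T \<and> t<q) ` {q\<in>\<rat>. \<exists>t\<in>T. t<q} \<union> {y\<in>T. \<forall>z\<in>T. y \<le> z}"
  define U where "U = (\<lambda>q. SOME t. t\<in>T \<and> t>q) ` {q\<in>\<rat>. \<exists>t\<in>T. t>q} \<union> {y\<in>T. \<forall>z\<in>T. z \<le> y}"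
  have cL: "countable L"
  proof -
    have "countable {q\<in>\<rat>. \<exists>t\<in>T. t<q}"
      by (rule countable_subset[OF _ countable_rat]) (rule Collect_restrict)
    moreover have "{y\<in>T. \<forall>z\<in>T. y \<le> z} \<subseteq> {Inf T}"
    proof
      fix y assume "y \<in> {y\<in>T. \<forall>z\<in>T. y \<le> z}"
      then have "Inf T = y" by (intro cInf_eq_minimum) auto
      then show "y \<in> {Inf T}" by simp
    qed
    hence "countable {y\<in>T. \<forall>z\<in>T. y \<le> z}"
      by (rule countable_subset) simp
    ultimately show ?thesis unfolding L_def by (intro countable_Un countable_image)
  qed
  have cU: "countable U"
  proof -
    have "countable {q\<in>\<rat>. \<exists>t\<in>T. t>q}"
      by (rule countable_subset[OF _ countable_rat]) (rule Collect_restrict)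
    moreover have "{y\<in>T. \<forall>z\<in>T. z \<le> y} \<subseteq> {Sup T}"
    proof
      fix y assume "y \<in> {y\<in>T. \<forall>z\<in>T. z \<le> y}"
      then have "Sup T = y" by (intro cSup_eq_maximum) auto
      then show "y \<in> {Sup T}" by simp
    qed
    hence "countable {y\<in>T. \<forall>z\<in>T. z \<le> y}"
      by (rule countable_subset) simp
    ultimately show ?thesis unfolding U_def by (intro countable_Un countable_image)
  qed
  have LT: "L \<subseteq> T"
  proof
    fix x assume "x \<in> L"
    then show "x \<in> T" unfolding L_def
    proof
      assume "x \<in> (\<lambda>q. SOME t. t\<in>T \<and> t<q) ` {q\<in>\<rat>. \<exists>t\<in>T. t<q}"
      then obtain q where q: "\<exists>t\<in>T. t<q" "x = (SOME t. t\<in>T \<and> t<q)" by auto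
      from q(1) have "\<exists>t. t\<in>T \<and> t<q" by blast
      then have "(SOME t. t\<in>T \<and> t<q) \<in> T" by (rule someI2_ex) simp
      then show ?thesis using q(2) by simp
    qed auto
  qed
  have UT: "U \<subseteq> T"
  proof
    fix x assume "x \<in> U"
    then show "x \<in> T" unfolding U_def
    proof
      assume "x \<in> (\<lambda>q. SOME t. t\<in>T \<and> t>q) ` {q\<in>\<rat>. \<exists>t\<in>T. t>q}"
      then obtain q where q: "\<exists>t\<in>T. t>q" "x = (SOME t. t\<in>T \<and> t>q)" by auto
      from q(1) have "\<exists>t. t\<in>T \<and> t>q" by blast
      then have "(SOME t. t\<in>T \<and> t>q) \<in> T" by (rule someI2_ex) simp
      then show ?thesis using q(2) by simp
    qed auto
  qed
  have Lb: "\<exists>a\<in>L. a \<le> y" if "y \<in> T" for y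
  proof (cases "\<forall>z\<in>T. y \<le> z")
    case True then show ?thesis using that unfolding L_def by auto
  next
    case False
    then obtain t where t: "t \<in> T" "t < y" by force
    then obtain q where q: "q \<in> \<rat>" "t < q" "q < y" using Rats_dense_in_real by blast
    have ex: "\<exists>t. t\<in>T \<and> t<q" using t q by blast
    have "(SOME t. t\<in>T \<and> t<q) < q" by (rule someI2_ex[OF ex]) simp
    moreover have "(SOME t. t\<in>T \<and> t<q) \<in> L" unfolding L_def using q t by blast
    ultimately show ?thesis using q by (meson less_imp_le order.strict_trans)
  qed
  have Ub: "\<exists>b\<in>U. y \<le> b" if "y \<in> T" for y
  proof (cases "\<forall>z\<in>T. z \<le> y")
    case True then show ?thesis using that unfolding U_def by auto
  next
    case False
    then obtain t where t: "t \<in> T" "y < t" by force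
    then obtain q where q: "q \<in> \<rat>" "y < q" "q < t" using Rats_dense_in_real by blast
    have ex: "\<exists>t. t\<in>T \<and> t>q" using t q by blast
    have "(SOME t. t\<in>T \<and> t>q) > q" by (rule someI2_ex[OF ex]) simp
    moreover have "(SOME t. t\<in>T \<and> t>q) \<in> U" unfolding U_def using q t by blast
    ultimately show ?thesis using q by (meson less_imp_le order.strict_trans)
  qed
  show ?thesis
  proof (intro exI conjI ballI)
    show "countable (L \<union> U)" using cL cU by simp
    show "L \<union> U \<subseteq> T" using LT UT by simp
    fix y assume "y \<in> T"
    then obtain a b where "a \<in> L" "a \<le> y" "b \<in> U" "y \<le> b" using Lb Ub by blast
    then show "\<exists>a\<in>L \<union> U. \<exists>b\<in>L \<union> U. a \<le> y \<and> y \<le> b" by blast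
  qed
qed

lemma manifold_path_connected:
  assumes "manifold M n"
  shows "path_connected_space M"
proof -
  have conn: "connected_space M" and loc: "\<And>x. x \<in> topspace M \<Longrightarrow> \<exists>U. openin M U \<and> x \<in> U \<and>
         subtopology M U homeomorphic_space Euclidean_space n"
    using assms unfolding manifold_def by auto
  have nb: "\<exists>U. openin M U \<and> y \<in> U \<and> (\<forall>z\<in>U. path_component_of M y z)" if yM: "y \<in> topspace M" for y
  proof -
    obtain U where U: "openin M U" "y \<in> U" "subtopology M U homeomorphic_space Euclidean_space n"
      using loc[OF yM] by blast
    have "path_connected_space (subtopology M U)"
      using homeomorphic_path_connected_space[OF U(3)] path_connected_Euclidean_space by simp
    hence pU: "path_connectedin M U" unfolding path_connectedin_def using openin_subset[OF U(1)] by simp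
    have "\<forall>z\<in>U. path_component_of M y z"
    proof
      fix z assume "z \<in> U"
      then show "path_component_of M y z" unfolding path_component_of using pU U(2) by blast
    qed
    thus ?thesis using U(1,2) by blast
  qed
  show ?thesis unfolding path_connected_space_iff_path_component
  proof (intro ballI)
    fix x y assume x: "x \<in> topspace M" and y: "y \<in> topspace M"
    define C where "C = Collect (path_component_of M x)"
    have o1: "openin M C"
    proof (subst openin_subopen, intro ballI)
      fix y assume "y \<in> C"
      hence yt: "y \<in> topspace M" and pxy: "path_component_of M x y" unfolding C_def
        by (auto dest: path_component_in_topspace)
      obtain U where U: "openin M U" "y \<in> U" "\<forall>z\<in>U. path_component_of M y z"
        using nb[OF yt] by blast
      have "U \<subseteq> C"
      proof
        fix z assume "z \<in> U"
        then have "path_component_of M y z" using U(3) by blast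
        then have "path_component_of M x z" using pxy path_component_of_trans by metis
        then show "z \<in> C" unfolding C_def by simp
      qed
      then show "\<exists>T. openin M T \<and> y \<in> T \<and> T \<subseteq> C" using U(1,2) by blast
    qed
    have o2: "openin M (topspace M - C)"
    proof (subst openin_subopen, intro ballI)
      fix y assume "y \<in> topspace M - C"
      hence yt: "y \<in> topspace M" and npxy: "\<not> path_component_of M x y" unfolding C_def by auto
      obtain U where U: "openin M U" "y \<in> U" "\<forall>z\<in>U. path_component_of M y z"
        using nb[OF yt] by blast
      have "U \<subseteq> topspace M - C"
      proof
        fix z assume zU: "z \<in> U"
        then have "path_component_of M y z" using U(3) by blast
        then have pzy: "path_component_of M z y" using path_component_of_sym by metis
        have "\<not> path_component_of M x z"
        proof
          assume "path_component_of M x z"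
          then have "path_component_of M x y" using pzy path_component_of_trans by metis
          then show False using npxy by simp
        qed
        moreover have "z \<in> topspace M" using openin_subset[OF U(1)] zU by blast
        ultimately show "z \<in> topspace M - C" unfolding C_def by simp
      qed
      then show "\<exists>T. openin M T \<and> y \<in> T \<and> T \<subseteq> topspace M - C" using U(1,2) by blast
    qed
    have "C \<subseteq> topspace M" unfolding C_def by (rule path_component_of_subset_topspace)
    hence "closedin M C" using o2 closedin_def by metis
    moreover have "x \<in> C" unfolding C_def using x by (simp add: path_component_of_refl)
    ultimately have "C = topspace M" using conn o1 connected_space_clopen_in by blast
    thus "path_component_of M x y" using y C_def by blast
  qed
qed

theorem theorem5p1:
  fixes M :: "'a topology" and n :: nat
  assumes "manifold M n"
  shows "property_L M euclideanreal"
proof -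
  have pc: "path_connected_space M" using manifold_path_connected[OF assms] .
  show ?thesis unfolding property_L_def
  proof (intro disjI2 allI impI)
    fix f assume f: "continuous_map M euclideanreal f"
    obtain S where S: "countable S" "S \<subseteq> f ` topspace M"
      "\<forall>y\<in>f ` topspace M. \<exists>a\<in>S. \<exists>b\<in>S. a \<le> y \<and> y \<le> b"
      using real_bracket_set[of "f ` topspace M"] by blast
    define pre where "pre = (\<lambda>s. SOME x. x \<in> topspace M \<and> f x = s)"
    have pre: "pre s \<in> topspace M \<and> f (pre s) = s" if sS: "s \<in> S" for s
    proof -
      have "\<exists>x. x \<in> topspace M \<and> f x = s" using S(2) sS by blast
      then show ?thesis unfolding pre_def by (rule someI_ex)
    qed
    define g where "g = (\<lambda>p. SOME h. pathin M h \<and> h 0 = pre (fst p) \<and> h 1 = pre (snd p))"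
    have g: "pathin M (g (a,b)) \<and> g (a,b) 0 = pre a \<and> g (a,b) 1 = pre b" if ab: "a \<in> S" "b \<in> S" for a b
    proof -
      have "path_component_of M (pre a) (pre b)"
        using pc pre[OF ab(1)] pre[OF ab(2)] path_connected_space_iff_path_component by metis
      then have "\<exists>h. pathin M h \<and> h 0 = pre a \<and> h 1 = pre b" unfolding path_component_of_def .
      then have "\<exists>h. pathin M h \<and> h 0 = pre (fst (a,b)) \<and> h 1 = pre (snd (a,b))" by simp
      then have "pathin M (g (a,b)) \<and> g (a,b) 0 = pre (fst (a,b)) \<and> g (a,b) 1 = pre (snd (a,b))"
        unfolding g_def by (rule someI_ex)
      then show ?thesis by simp
    qed
    have cp: "compactin M (g p ` {0..1})" if pS: "p \<in> S \<times> S" for p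
    proof -
      obtain a b where ab: "p = (a,b)" "a \<in> S" "b \<in> S" using pS by blast
      have "pathin M (g (a,b))" using g[OF ab(2,3)] by simp
      then show ?thesis using ab(1) by (simp add: compactin_path_image)
    qed
    define Z where "Z = \<Union> ((\<lambda>p. g p ` {0..1}) ` (S \<times> S))"
    have ZM: "Z \<subseteq> topspace M"
      unfolding Z_def by (rule UN_least, rule compactin_subset_topspace, rule cp)
    show "\<exists>Z. Z \<subseteq> topspace M \<and> Lindelof_space (subtopology M Z) \<and> f ` Z = f ` topspace M"
    proof (intro exI conjI)
      show "Z \<subseteq> topspace M" by (rule ZM)
      show "Lindelof_space (subtopology M Z)" unfolding Z_def
      proof (rule Lindelof_space_Union)
        show "countable ((\<lambda>p. g p ` {0..1}) ` (S \<times> S))" using S(1) by simp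
        fix U assume "U \<in> (\<lambda>p. g p ` {0..1}) ` (S \<times> S)"
        then obtain p where "p \<in> S \<times> S" "U = g p ` {0..1}" by blast
        then have "compactin M U" using cp by simp
        then show "Lindelof_space (subtopology M U)"
          by (intro compact_imp_Lindelof_space compact_space_subtopology)
      qed
      have "y \<in> f ` Z" if y: "y \<in> f ` topspace M" for y
      proof -
        obtain a b where ab: "a \<in> S" "b \<in> S" "a \<le> y" "y \<le> b" using S(3) y by blast
        note gab = g[OF ab(1,2)]
        have "connectedin M (g (a,b) ` {0..1})" using gab connectedin_path_image by blast
        hence "connectedin euclideanreal (f ` g (a,b) ` {0..1})"
          by (rule connectedin_continuous_map_image[OF f])
        hence ci: "connected (f ` g (a,b) ` {0..1})" by simp
        have "(0::real) \<in> {0..1}" "(1::real) \<in> {0..1}" by auto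
        then have "a \<in> f ` g (a,b) ` {0..1}" "b \<in> f ` g (a,b) ` {0..1}"
          using gab pre[OF ab(1)] pre[OF ab(2)] by (metis image_eqI)+
        then have "y \<in> f ` g (a,b) ` {0..1}" using ci ab(3,4)
          unfolding connected_iff_interval by blast
        moreover have "g (a,b) ` {0..1} \<subseteq> Z" unfolding Z_def using ab by blast
        ultimately show ?thesis by blast
      qed
      then show "f ` Z = f ` topspace M" using ZM by blast
    qed
  qed
qed

end
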